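(* For every real $t$ with $1\leq t\leq n$: $S(t)>0$ if and only if $t>\vartheta^+(G)$.
   Context: Let $G$ be a simple graph with vertex set $V=\{1,\dots,n\}$, edge set $E$ and adjacency matrix $A$. Let $e$ be the all-ones vector, $\langle M,N\rangle=\operatorname{trace}(M^TN)$, and $X\geq 0$ mean entrywise nonnegativity. For real $t$ with $1\leq t\leq n$, $Q(t)$ is the semidefinite program $$\min \tfrac12\langle A,X\rangle\ \text{ s.t. } X\succeq 0,\ X\geq 0,\ \operatorname{trace}(X)=t,\ Xe=t\operatorname{diag}(X)$$ over symmetric $n\times n$ matrices $X$, and $S(t)$ denotes its optimal value. Schrijver's number is $$\vartheta^+(G)=\max\ \operatorname{trace}(X)\ \text{ s.t. } X-xx^T\succeq 0,\ \operatorname{diag}(X)=x,\ X_{i,j}=0\ \forall [i,j]\in E,\ X\geq 0.$$ *)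

theory Defs
  imports "HOL-Analysis.Analysis"
begin

text \<open>Vertices are the elements of a finite type 'n (so n = CARD('n)); the simple graph
  is given by a symmetric irreflexive edge relation E. Matrices are real^'n^'n.\<close>

definition simple_graph :: "('n \<Rightarrow> 'n \<Rightarrow> bool) \<Rightarrow> bool" where
  "simple_graph E \<longleftrightarrow> (\<forall>i j. E i j \<longleftrightarrow> E j i) \<and> (\<forall>i. \<not> E i i)"

definition adj_matrix :: "('n::finite \<Rightarrow> 'n \<Rightarrow> bool) \<Rightarrow> real^'n^'n" where
  "adj_matrix E = (\<chi> i j. if E i j then 1 else 0)"

definition ones :: "real^'n" where
  "ones = (\<chi> i. 1)"

definition diag_vec :: "real^'n^'n \<Rightarrow> real^'n" where
  "diag_vec X = (\<chi> i. X $ i $ i)"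

definition outer :: "real^'n \<Rightarrow> real^'n^'n" where
  "outer x = (\<chi> i j. x $ i * x $ j)"

definition frob :: "real^'n^'n \<Rightarrow> real^'n^'n \<Rightarrow> real" where
  "frob M N = trace (transpose M ** N)"

definition psd :: "real^'n^'n \<Rightarrow> bool" where
  "psd X \<longleftrightarrow> transpose X = X \<and> (\<forall>v. v \<bullet> (X *v v) \<ge> 0)"

definition nonneg_mat :: "real^'n^'n \<Rightarrow> bool" where
  "nonneg_mat X \<longleftrightarrow> (\<forall>i j. X $ i $ j \<ge> 0)"

definition Q_feasible :: "real \<Rightarrow> real^'n::finite^'n \<Rightarrow> bool" where
  "Q_feasible t X \<longleftrightarrow> transpose X = X \<and> psd X \<and> nonneg_mat X \<and> trace X = t
     \<and> X *v ones = t *\<^sub>R diag_vec X"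

definition S_val :: "('n::finite \<Rightarrow> 'n \<Rightarrow> bool) \<Rightarrow> real \<Rightarrow> real" where
  "S_val E t = Inf {frob (adj_matrix E) X / 2 | X :: real^'n^'n. Q_feasible t X}"

definition theta_plus :: "('n::finite \<Rightarrow> 'n \<Rightarrow> bool) \<Rightarrow> real" where
  "theta_plus E = Sup {trace X | X :: real^'n^'n. \<exists>x. psd (X - outer x)
      \<and> diag_vec X = x \<and> (\<forall>i j. E i j \<longrightarrow> X $ i $ j = 0) \<and> nonneg_mat X}"

end

theory Submission
  imports Defs
begin


definition qf :: "real^'n::finite^'n \<Rightarrow> real^'n \<Rightarrow> real" where
  "qf X v = (\<Sum>i\<in>UNIV. \<Sum>j\<in>UNIV. v$i * X$i$j * v$j)"

lemma qf_eq: "v \<bullet> (X *v v) = qf X v"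
  by (simp add: qf_def inner_vec_def matrix_vector_mult_def sum_distrib_left mult.assoc mult.commute mult.left_commute)

lemma symm_iff: "transpose X = X \<longleftrightarrow> (\<forall>i j. X$i$j = X$j$i)"
  by (auto simp: transpose_def vec_eq_iff)

lemma psd_iff: "psd X \<longleftrightarrow> (\<forall>i j. X$i$j = X$j$i) \<and> (\<forall>v. qf X v \<ge> 0)"
  by (simp add: psd_def qf_eq symm_iff)

lemma cont_entry: "continuous_on S (\<lambda>X::real^'n::finite^'m::finite. X$i$j)"
  by (intro continuous_intros)

lemma cont_qf: "continuous_on S (\<lambda>X. qf X v)"
  unfolding qf_def by (intro continuous_intros)

lemma closed_psd: "closed {X::real^'n::finite^'n. psd X}"
proof -
  have "{X::real^'n^'n. psd X} = {X. \<forall>i. \<forall>j. X$i$j = X$j$i} \<inter> {X. \<forall>v. 0 \<le> qf X v}"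
    by (auto simp: psd_iff)
  moreover have "closed {X::real^'n^'n. \<forall>i. \<forall>j. X$i$j = X$j$i}"
    by (intro closed_Collect_all closed_Collect_eq cont_entry)
  moreover have "closed {X::real^'n^'n. \<forall>v. 0 \<le> qf X v}"
    by (intro closed_Collect_all closed_Collect_le cont_qf continuous_on_const)
  ultimately show ?thesis by auto
qed

lemma closed_nonneg: "closed {X::real^'n::finite^'n. nonneg_mat X}"
  unfolding nonneg_mat_def
  by (intro closed_Collect_all closed_Collect_le cont_entry continuous_on_const)

lemma cont_trace: "continuous_on S (\<lambda>X::real^'n::finite^'n. trace X)"
  unfolding trace_def by (intro continuous_intros)

definition bil :: "real^'n::finite^'n \<Rightarrow> real^'n \<Rightarrow> real^'n \<Rightarrow> real" where
  "bil X v w = (\<Sum>i\<in>UNIV. \<Sum>j\<in>UNIV. v$i * X$i$j * w$j)"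

lemma qf_comb:
  assumes s: "\<forall>i j. X$i$j = X$j$i"
  shows "qf X (v + \<mu> *\<^sub>R w) = qf X v + 2 * \<mu> * bil X v w + \<mu>^2 * qf X w"
proof -
  have sw: "(\<Sum>i\<in>UNIV. \<Sum>j\<in>UNIV. w$i * X$i$j * v$j) = bil X v w"
  proof -
    have "(\<Sum>i\<in>UNIV. \<Sum>j\<in>UNIV. w$i * X$i$j * v$j) = (\<Sum>j\<in>UNIV. \<Sum>i\<in>UNIV. w$i * X$i$j * v$j)"
      by (rule sum.swap)
    also have "\<dots> = bil X v w" unfolding bil_def
      by (intro sum.cong refl) (metis s mult.commute mult.assoc)
    finally show ?thesis .
  qed
  have "qf X (v + \<mu> *\<^sub>R w) = (\<Sum>i\<in>UNIV. \<Sum>j\<in>UNIV. v$i * X$i$j * v$j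
      + \<mu> * (v$i * X$i$j * w$j) + \<mu> * (w$i * X$i$j * v$j) + \<mu>^2 * (w$i * X$i$j * w$j))"
    unfolding qf_def by (intro sum.cong refl) (simp add: algebra_simps power2_eq_square)
  also have "\<dots> = qf X v + \<mu> * bil X v w + \<mu> * (\<Sum>i\<in>UNIV. \<Sum>j\<in>UNIV. w$i * X$i$j * v$j) + \<mu>^2 * qf X w"
    by (simp add: sum.distrib sum_distrib_left[symmetric] qf_def bil_def)
  also have "\<dots> = qf X v + \<mu> * bil X v w + \<mu> * bil X v w + \<mu>^2 * qf X w"
    by (simp only: sw)
  also have "\<dots> = qf X v + 2 * \<mu> * bil X v w + \<mu>^2 * qf X w"
    by (simp add: algebra_simps)
  finally show ?thesis .
qed

definition ev :: "'n::finite \<Rightarrow> real^'n" where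
  "ev i = (\<chi> k. if k = i then 1 else 0)"

lemma bil_ev: "bil X (ev i) (ev j) = X$i$j"
proof -
  have "bil X (ev i) (ev j) = (\<Sum>a\<in>UNIV. \<Sum>b\<in>UNIV. if a = i \<and> b = j then X$i$j else 0)"
    unfolding bil_def ev_def by (intro sum.cong refl) auto
  also have "\<dots> = X$i$j"
  proof -
    have "\<And>a. (\<Sum>b\<in>UNIV. if a = i \<and> b = j then X$i$j else (0::real)) = (if a = i then X$i$j else 0)"
      by (case_tac "a = i") auto
    thus ?thesis by simp
  qed
  finally show ?thesis .
qed

lemma qf_bil: "qf X v = bil X v v"
  by (simp add: qf_def bil_def)

lemma psd_diag: "psd X \<Longrightarrow> X$i$i \<ge> 0"
proof -
  assume "psd X"
  then have "qf X (ev i) \<ge> 0" by (simp add: psd_iff)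
  thus ?thesis by (simp add: qf_bil bil_ev)
qed

lemma psd_off: "psd X \<Longrightarrow> 2 * X$i$j \<le> X$i$i + X$j$j"
proof -
  assume p: "psd X"
  have s: "\<forall>i j. X$i$j = X$j$i" using p by (simp add: psd_iff)
  have "qf X (ev i + (-1) *\<^sub>R ev j) \<ge> 0" using p by (simp add: psd_iff)
  moreover have "qf X (ev i + (-1) *\<^sub>R ev j) = X$i$i - 2 * X$i$j + X$j$j"
    using qf_comb[OF s, of "ev i" "-1" "ev j"] by (simp add: qf_bil bil_ev)
  ultimately show ?thesis by linarith
qed

lemma diag_le_trace: "nonneg_mat X \<Longrightarrow> X$i$i \<le> trace X"
  unfolding trace_def nonneg_mat_def
  by (rule member_le_sum[of i UNIV "\<lambda>i. X$i$i"]) auto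

lemma two_diag_le_trace: "nonneg_mat X \<Longrightarrow> i \<noteq> j \<Longrightarrow> X$i$i + X$j$j \<le> trace X"
proof -
  assume n: "nonneg_mat X" and ij: "i \<noteq> j"
  have "(\<Sum>k\<in>{i,j}. X$k$k) \<le> (\<Sum>k\<in>UNIV. X$k$k)"
    by (rule sum_mono2) (use n in \<open>auto simp: nonneg_mat_def\<close>)
  thus ?thesis using ij by (simp add: trace_def)
qed

lemma entry_bound: "psd X \<Longrightarrow> nonneg_mat X \<Longrightarrow> \<bar>X$i$j\<bar> \<le> trace X"
proof -
  assume p: "psd X" and n: "nonneg_mat X"
  have "X$i$j \<ge> 0" using n by (simp add: nonneg_mat_def)
  moreover have "X$i$j \<le> trace X"
  proof (cases "i = j")
    case True thus ?thesis using diag_le_trace[OF n] by simp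
  next
    case False
    have "X$i$i \<ge> 0" using n by (simp add: nonneg_mat_def)
    thus ?thesis using psd_off[OF p, of i j] two_diag_le_trace[OF n False] diag_le_trace[OF n, of i] by linarith
  qed
  ultimately show ?thesis by simp
qed

lemma bounded_PT: "bounded {X::real^'n::finite^'n. psd X \<and> nonneg_mat X \<and> trace X = c}"
proof -
  have "\<forall>X\<in>{X::real^'n^'n. psd X \<and> nonneg_mat X \<and> trace X = c}. norm X \<le> (\<Sum>i\<in>(UNIV::'n set). \<Sum>j\<in>(UNIV::'n set). c)"
  proof
    fix X :: "real^'n^'n" assume "X \<in> {X. psd X \<and> nonneg_mat X \<and> trace X = c}"
    hence p: "psd X" "nonneg_mat X" "trace X = c" by auto
    have "norm X \<le> (\<Sum>i\<in>UNIV. norm (X$i))"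
      unfolding norm_vec_def by (rule L2_set_le_sum) auto
    also have "\<dots> \<le> (\<Sum>i\<in>UNIV. \<Sum>j\<in>UNIV. \<bar>X$i$j\<bar>)"
      by (rule sum_mono) (rule norm_le_l1_cart)
    also have "\<dots> \<le> (\<Sum>i\<in>(UNIV::'n set). \<Sum>j\<in>(UNIV::'n set). c)"
      by (intro sum_mono) (use entry_bound[OF p(1,2)] p(3) in auto)
    finally show "norm X \<le> (\<Sum>i\<in>(UNIV::'n set). \<Sum>j\<in>(UNIV::'n set). c)" .
  qed
  thus ?thesis unfolding bounded_iff by blast
qed

lemma compact_PT:
  assumes "closed K"
  shows "compact ({X::real^'n::finite^'n. psd X \<and> nonneg_mat X \<and> trace X = c} \<inter> K)"
proof -
  have "closed {X::real^'n::finite^'n. psd X \<and> nonneg_mat X \<and> trace X = c}"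
  proof -
    have "{X::real^'n::finite^'n. psd X \<and> nonneg_mat X \<and> trace X = c}
      = {X. psd X} \<inter> {X. nonneg_mat X} \<inter> {X. trace X = c}" by auto
    moreover have "closed {X::real^'n::finite^'n. trace X = c}"
      by (intro closed_Collect_eq cont_trace continuous_on_const)
    ultimately show ?thesis using closed_psd closed_nonneg by auto
  qed
  thus ?thesis using assms bounded_subset[OF bounded_PT Int_lower1]
    by (simp add: compact_eq_bounded_closed closed_Int)
qed

lemma qf_scale: "qf (c *\<^sub>R X) v = c * qf X v"
  by (simp add: qf_def sum_distrib_left mult.assoc mult.left_commute)

lemma qf_diff: "qf (X - Y) v = qf X v - qf Y v"
  unfolding qf_def by (simp add: sum_subtractf[symmetric] right_diff_distrib left_diff_distrib)

lemma qf_outer: "qf (outer x) v = (v \<bullet> x)^2"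
proof -
  have "qf (outer x) v = (\<Sum>i\<in>UNIV. \<Sum>j\<in>UNIV. (v$i*x$i)*(v$j*x$j))"
    unfolding qf_def outer_def by (intro sum.cong refl) (simp add: ac_simps)
  thus ?thesis by (simp add: inner_vec_def power2_eq_square sum_product)
qed



lemma bil_sym: "\<forall>i j. X$i$j = X$j$i \<Longrightarrow> bil X v w = bil X w v"
proof -
  assume s: "\<forall>i j. X$i$j = X$j$i"
  have "bil X v w = (\<Sum>j\<in>UNIV. \<Sum>i\<in>UNIV. v$i * X$i$j * w$j)"
    unfolding bil_def by (rule sum.swap)
  also have "\<dots> = bil X w v" unfolding bil_def
    by (intro sum.cong refl) (metis s mult.commute mult.assoc)
  finally show ?thesis .
qed

lemma bil_ev_ones: "bil X (ev k) ones = (\<Sum>j\<in>UNIV. X$k$j)"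
proof -
  have "bil X (ev k) ones = (\<Sum>a\<in>UNIV. if a = k then (\<Sum>j\<in>UNIV. X$k$j) else 0)"
    unfolding bil_def ev_def ones_def by (intro sum.cong refl) auto
  thus ?thesis by simp
qed

lemma bil_ones_right: "bil X v ones = (\<Sum>i\<in>UNIV. v$i * (\<Sum>j\<in>UNIV. X$i$j))"
  by (simp add: bil_def ones_def sum_distrib_left)

lemma qf_ones: "qf X ones = (\<Sum>i\<in>UNIV. \<Sum>j\<in>UNIV. X$i$j)"
  by (simp add: qf_def ones_def)

lemma qf_add: "qf (A + B) v = qf A v + qf B v"
  unfolding qf_def by (simp add: sum.distrib[symmetric] distrib_left distrib_right)

lemma trace_scale: "trace (c *\<^sub>R X) = c * trace X"
  by (simp add: trace_def sum_distrib_left)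

lemma Q_feasible_iff: "Q_feasible t X \<longleftrightarrow> psd X \<and> nonneg_mat X \<and> trace X = t
   \<and> (\<forall>i. (\<Sum>j\<in>UNIV. X$i$j) = t * X$i$i)"
  by (auto simp: Q_feasible_def psd_def vec_eq_iff matrix_vector_mult_def ones_def diag_vec_def)

lemma frob_eq: "frob M N = (\<Sum>i\<in>UNIV. \<Sum>k\<in>UNIV. M$k$i * N$k$i)"
  by (simp add: frob_def trace_def matrix_matrix_mult_def transpose_def)

lemma frob_adj: "frob (adj_matrix E) X = (\<Sum>i\<in>UNIV. \<Sum>k\<in>UNIV. if E k i then X$k$i else 0)"
  unfolding frob_eq adj_matrix_def by (intro sum.cong refl) auto

lemma frob_nonneg: assumes n: "nonneg_mat X" shows "frob (adj_matrix E) X \<ge> 0"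
proof -
  have nn: "\<And>i k. (if E k i then X$k$i else 0) \<ge> 0" using n by (auto simp: nonneg_mat_def)
  show ?thesis unfolding frob_adj by (intro sum_nonneg nn)
qed

lemma frob_zero: "nonneg_mat X \<Longrightarrow> frob (adj_matrix E) X = 0 \<longleftrightarrow> (\<forall>i j. E i j \<longrightarrow> X$i$j = 0)"
proof -
  assume n: "nonneg_mat X"
  have nn: "\<And>i k. (if E k i then X$k$i else 0) \<ge> 0" using n by (auto simp: nonneg_mat_def)
  have "frob (adj_matrix E) X = 0 \<longleftrightarrow> (\<forall>i. (\<Sum>k\<in>UNIV. if E k i then X$k$i else 0) = 0)"
    unfolding frob_adj by (subst sum_nonneg_eq_0_iff) (auto intro: sum_nonneg nn)
  also have "\<dots> \<longleftrightarrow> (\<forall>i k. (if E k i then X$k$i else 0) = 0)"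
    using n by (subst sum_nonneg_eq_0_iff) (auto intro: nn simp: nonneg_mat_def)
  also have "\<dots> \<longleftrightarrow> (\<forall>i j. E i j \<longrightarrow> X$i$j = 0)" by auto
  finally show ?thesis .
qed

lemma cont_frob: "continuous_on S (\<lambda>X. frob M X / 2)"
  unfolding frob_eq by (intro continuous_intros) auto

lemma Q_theta:
  assumes q: "Q_feasible t X" and t: "t > 0"
  shows "psd (X - outer (diag_vec X))"
proof -
  have p: "psd X" and n: "nonneg_mat X" and tr: "trace X = t"
    and rs: "\<And>i. (\<Sum>j\<in>UNIV. X$i$j) = t * X$i$i" using q by (auto simp: Q_feasible_iff)
  have s: "\<forall>i j. X$i$j = X$j$i" using p by (simp add: psd_iff)
  have c: "qf X ones = t^2"
    using rs tr by (simp add: qf_ones trace_def sum_distrib_left[symmetric] power2_eq_square)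
  have "qf X v \<ge> (v \<bullet> diag_vec X)^2" for v
  proof -
    define b where "b = bil X v ones"
    have vd: "v \<bullet> diag_vec X = b / t"
      unfolding b_def bil_ones_right rs using t
      by (simp add: inner_vec_def diag_vec_def sum_divide_distrib)
    have "0 \<le> qf X (v + (- (b / t^2)) *\<^sub>R ones)" using p by (simp add: psd_iff)
    also have "\<dots> = qf X v - b^2 / t^2"
      unfolding qf_comb[OF s] c b_def[symmetric] using t
      by (simp add: field_simps power2_eq_square)
    finally have "b^2 / t^2 \<le> qf X v" by simp
    thus ?thesis by (simp add: vd power_divide)
  qed
  moreover have "\<forall>i j. (X - outer (diag_vec X))$i$j = (X - outer (diag_vec X))$j$i"
    using s by (simp add: outer_def mult.commute)
  ultimately show ?thesis by (simp add: psd_iff qf_diff qf_outer)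
qed



definition Dg :: "real^'n::finite^'n \<Rightarrow> real^'n^'n" where
  "Dg X = (\<chi> i j. if i = j then X$i$j else 0)"

lemma qf_Dg: "qf (Dg X) v = (\<Sum>i\<in>UNIV. v$i * X$i$i * v$i)"
proof -
  have "\<And>i. (\<Sum>j\<in>UNIV. v$i * Dg X$i$j * v$j) = (\<Sum>j\<in>UNIV. if j = i then v$i * X$i$i * v$i else 0)"
    by (intro sum.cong refl) (auto simp: Dg_def)
  thus ?thesis unfolding qf_def by simp
qed

lemma rs_Dg: "(\<Sum>j\<in>UNIV. Dg X$i$j) = X$i$i"
proof -
  have "(\<Sum>j\<in>UNIV. Dg X$i$j) = (\<Sum>j\<in>UNIV. if j = i then X$i$i else 0)"
    by (intro sum.cong refl) (auto simp: Dg_def)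
  thus ?thesis by simp
qed

lemma trace_Dg: "trace (Dg X) = trace X"
  by (simp add: trace_def Dg_def)

lemma mono_Q:
  assumes q: "Q_feasible s X" and t1: "1 \<le> t" and ts: "t \<le> s"
  shows "\<exists>M. Q_feasible t M \<and> (\<forall>i j. X$i$j = 0 \<longrightarrow> M$i$j = 0)"
proof -
  have p: "psd X" and n: "nonneg_mat X" and tr: "trace X = s"
    and rs: "\<And>i. (\<Sum>j\<in>UNIV. X$i$j) = s * X$i$i" using q by (auto simp: Q_feasible_iff)
  have sx: "\<forall>i j. X$i$j = X$j$i" using p by (simp add: psd_iff)
  define \<beta> where "\<beta> = (t - 1) / (s - 1)"
  have b0: "0 \<le> \<beta>" and b1: "\<beta> \<le> 1" and bk: "\<beta> * s + (1 - \<beta>) = t"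
  proof -
    have "0 \<le> \<beta> \<and> \<beta> \<le> 1 \<and> \<beta> * s + (1 - \<beta>) = t"
    proof (cases "s = 1")
      case True thus ?thesis using t1 ts by (simp add: \<beta>_def)
    next
      case False
      hence sp: "s - 1 > 0" using t1 ts by simp
      have e1: "\<beta> * (s - 1) = t - 1" using sp by (simp add: \<beta>_def)
      have e2: "\<beta> * s + (1 - \<beta>) = \<beta> * (s - 1) + 1" by (simp add: algebra_simps)
      have "\<beta> \<ge> 0" using sp t1 by (simp add: \<beta>_def)
      moreover have "\<beta> \<le> 1" using sp ts by (simp add: \<beta>_def pos_divide_le_eq)
      ultimately show ?thesis using e1 e2 by simp
    qed
    thus "0 \<le> \<beta>" "\<beta> \<le> 1" "\<beta> * s + (1 - \<beta>) = t" by auto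
  qed
  have s0: "s > 0" using t1 ts by simp
  define M where "M = (t / s) *\<^sub>R (\<beta> *\<^sub>R X + (1 - \<beta>) *\<^sub>R Dg X)"
  have Mij: "\<And>i j. M$i$j = (t / s) * (\<beta> * X$i$j + (1 - \<beta>) * (if i = j then X$i$j else 0))"
    by (simp add: M_def Dg_def)
  have "psd M"
  proof -
    have "\<forall>i j. M$i$j = M$j$i"
    proof (intro allI)
      fix i j show "M$i$j = M$j$i"
        by (cases "i = j") (simp_all add: Mij sx[rule_format, of i j])
    qed
    moreover have "qf M v \<ge> 0" for v
    proof -
      have "qf X v \<ge> 0" using p by (simp add: psd_iff)
      moreover have "qf (Dg X) v \<ge> 0" unfolding qf_Dg
        by (intro sum_nonneg) (metis psd_diag[OF p] mult_nonneg_nonneg zero_le_square mult.commute mult.assoc)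
      moreover have "qf M v = (t / s) * (\<beta> * qf X v + (1 - \<beta>) * qf (Dg X) v)"
        unfolding M_def by (simp only: qf_scale qf_add)
      ultimately show ?thesis using b0 b1 s0 t1
        by (simp only:) (intro mult_nonneg_nonneg add_nonneg_nonneg; auto)
    qed
    ultimately show ?thesis by (simp add: psd_iff)
  qed
  moreover have "nonneg_mat M"
    unfolding nonneg_mat_def Mij
  proof (intro allI)
    fix i j
    have "X$i$j \<ge> 0" using n by (simp add: nonneg_mat_def)
    moreover have "t / s \<ge> 0" using s0 t1 by simp
    ultimately show "0 \<le> t / s * (\<beta> * X $ i $ j + (1 - \<beta>) * (if i = j then X $ i $ j else 0))"
      using b0 b1 by (intro mult_nonneg_nonneg add_nonneg_nonneg) auto
  qed
  moreover have "trace M = t"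
  proof -
    have "trace M = (t / s) * (\<beta> * s + (1 - \<beta>) * s)"
      by (simp add: M_def trace_scale trace_add trace_Dg tr)
    also have "\<dots> = t" using s0 by (simp add: field_simps)
    finally show ?thesis .
  qed
  moreover have "(\<Sum>j\<in>UNIV. M$i$j) = t * M$i$i" for i
  proof -
    have "(\<Sum>j\<in>UNIV. M$i$j) = (\<Sum>j\<in>UNIV. (t / s) * (\<beta> * X$i$j + (1 - \<beta>) * Dg X$i$j))"
      by (simp add: M_def)
    also have "\<dots> = (t / s) * (\<beta> * (\<Sum>j\<in>UNIV. X$i$j) + (1 - \<beta>) * (\<Sum>j\<in>UNIV. Dg X$i$j))"
      by (simp only: sum_distrib_left[symmetric] sum.distrib)
    also have "\<dots> = (t / s) * ((\<beta> * s + (1 - \<beta>)) * X$i$i)"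
      by (simp add: rs rs_Dg algebra_simps)
    also have "\<dots> = (t / s) * (t * X$i$i)" using bk by simp
    also have "\<dots> = t * M$i$i" by (simp add: Mij algebra_simps)
    finally show ?thesis .
  qed
  moreover have "\<forall>i j. X$i$j = 0 \<longrightarrow> M$i$j = 0" by (simp add: Mij)
  ultimately have "Q_feasible t M \<and> (\<forall>i j. X$i$j = 0 \<longrightarrow> M$i$j = 0)"
    by (simp only: Q_feasible_iff) blast
  thus ?thesis by blast
qed

definition TT :: "('n::finite \<Rightarrow> 'n \<Rightarrow> bool) \<Rightarrow> (real^'n^'n) set" where
  "TT E = {Z. psd Z \<and> nonneg_mat Z \<and> trace Z = 1} \<inter> {Z. \<forall>i j. E i j \<longrightarrow> Z$i$j = 0}"

lemma closed_edges: "closed {Z::real^'n::finite^'n. \<forall>i j. E i j \<longrightarrow> Z$i$j = 0}"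
proof (intro closed_Collect_all)
  fix i j
  show "closed {Z::real^'n::finite^'n. E i j \<longrightarrow> Z$i$j = 0}"
  proof (cases "E i j")
    case True thus ?thesis by (simp add: closed_Collect_eq cont_entry)
  next
    case False thus ?thesis by simp
  qed
qed

lemma compact_TT: "compact (TT E)"
  unfolding TT_def by (rule compact_PT[OF closed_edges])

lemma psd_outer: "psd (outer x)"
proof -
  have "\<forall>i j. outer x$i$j = outer x$j$i" by (simp add: outer_def mult.commute)
  thus ?thesis by (simp add: psd_iff qf_outer)
qed

lemma outer_ev_TT:
  assumes g: "simple_graph E"
  shows "outer (ev k) \<in> TT E" and "qf (outer (ev k)) ones = 1"
proof -
  have "psd (outer (ev k))" by (rule psd_outer)
  moreover have "nonneg_mat (outer (ev k))"
    by (simp add: nonneg_mat_def outer_def ev_def)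
  moreover have "trace (outer (ev k)) = 1"
  proof -
    have "\<And>i. outer (ev k)$i$i = (if i = k then 1 else 0)" by (simp add: outer_def ev_def)
    thus ?thesis by (simp add: trace_def)
  qed
  moreover have "\<forall>i j. E i j \<longrightarrow> outer (ev k)$i$j = 0"
    using g by (auto simp: outer_def ev_def simple_graph_def)
  ultimately show "outer (ev k) \<in> TT E" by (simp add: TT_def)
  show "qf (outer (ev k)) ones = 1"
    by (simp add: qf_outer inner_vec_def ones_def ev_def)
qed

lemma TT_max:
  assumes g: "simple_graph E"
  shows "\<exists>Zs\<in>TT E. \<forall>Z\<in>TT E. qf Z ones \<le> qf Zs ones"
  using continuous_attains_sup[OF compact_TT, of E "\<lambda>Z. qf Z ones"] outer_ev_TT[OF g]
  by (auto intro: cont_qf)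

lemma quad_zero:
  fixes h g c :: real
  assumes h: "h > 0" and le: "\<forall>e. \<bar>e\<bar> \<le> h \<longrightarrow> 2*e*g + e^2*c \<le> 0"
  shows "g = 0"
proof (rule ccontr)
  assume g0: "g \<noteq> 0"
  define m where "m = min h (\<bar>g\<bar> / (\<bar>c\<bar> + 1))"
  have m0: "m > 0" using h g0 by (simp add: m_def)
  have mh: "m \<le> h" by (simp add: m_def)
  have mc: "m * \<bar>c\<bar> \<le> \<bar>g\<bar>"
  proof -
    have "m \<le> \<bar>g\<bar> / (\<bar>c\<bar> + 1)" by (simp add: m_def)
    moreover have "\<bar>c\<bar> + 1 > 0" by simp
    ultimately have "m * (\<bar>c\<bar> + 1) \<le> \<bar>g\<bar>" by (simp add: pos_le_divide_eq)
    thus ?thesis using m0 by (simp add: algebra_simps)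
  qed
  have mc2: "m^2 * c \<ge> - (m * \<bar>g\<bar>)"
  proof -
    have "m^2 * c \<ge> m^2 * (- \<bar>c\<bar>)" by (intro mult_left_mono) simp_all
    hence "m^2 * c \<ge> - (m * (m * \<bar>c\<bar>))" by (simp add: power2_eq_square)
    moreover have "m * (m * \<bar>c\<bar>) \<le> m * \<bar>g\<bar>" using mc m0 by simp
    ultimately show ?thesis by linarith
  qed
  show False
  proof (cases "g > 0")
    case True
    have "2*m*g + m^2*c \<le> 0" using le mh m0 by auto
    moreover have "2*m*g = 2 * (m * \<bar>g\<bar>)" using True by simp
    moreover have "m * \<bar>g\<bar> > 0" using m0 g0 by simp
    ultimately show False using mc2 by linarith
  next
    case False
    hence gn: "g < 0" using g0 by simp
    have "\<bar>-m\<bar> \<le> h" using mh m0 by simp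
    hence "2*(-m)*g + (-m)^2*c \<le> 0" using le by blast
    moreover have "2*(-m)*g = 2 * (m * \<bar>g\<bar>)" using gn by simp
    moreover have "m * \<bar>g\<bar> > 0" using m0 g0 by simp
    ultimately show False using mc2 by simp
  qed
qed



lemma perturb:
  assumes zs: "Zs \<in> TT E" and mx: "\<forall>Z\<in>TT E. qf Z ones \<le> qf Zs ones"
  shows "(\<Sum>j\<in>UNIV. Zs$k$j) = qf Zs ones * Zs$k$k"
proof -
  define z where "z = Zs"
  define \<sigma> where "\<sigma> = qf z ones"
  define r where "r = (\<Sum>j\<in>UNIV. z$k$j)"
  define zk where "zk = z$k$k"
  have p: "psd z" and n: "nonneg_mat z" and tr: "trace z = 1"
    and ed: "\<forall>i j. E i j \<longrightarrow> z$i$j = 0" using zs by (auto simp: TT_def z_def)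
  have s: "\<forall>i j. z$i$j = z$j$i" using p by (simp add: psd_iff)
  have zk0: "zk \<ge> 0" using psd_diag[OF p] by (simp add: zk_def)
  have zk1: "zk \<le> 1" using diag_le_trace[OF n, of k] tr by (simp add: zk_def)
  have key: "\<forall>e. \<bar>e\<bar> \<le> 1/2 \<longrightarrow> 2*e*(r - \<sigma>*zk) + e^2*(zk - \<sigma>*zk) \<le> 0"
  proof (intro allI impI)
    fix e :: real assume e: "\<bar>e\<bar> \<le> 1/2"
    define d where "d = ones + e *\<^sub>R ev k"
    have di: "\<And>i. d$i = 1 + e * (if i = k then 1 else 0)" by (simp add: d_def ones_def ev_def)
    have em: "e \<ge> -1/2" using e by arith
    have dpos: "\<And>i. d$i > 0" using em by (simp add: di)
    define W where "W = (\<chi> i j. d$i * d$j * z$i$j)"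
    define \<tau> where "\<tau> = 1 + (2*e + e^2) * zk"
    have "e + 1 \<ge> 1/2" using em by simp
    hence "(e + 1)^2 \<ge> (1/2)^2" by (intro power_mono) simp_all
    moreover have "(e + 1)^2 = 2*e + e^2 + 1" by (simp add: power2_eq_square algebra_simps)
    ultimately have c1: "2*e + e^2 \<ge> -3/4" by (simp add: power2_eq_square)
    have "(-3/4) * zk \<le> (2*e + e^2) * zk" using c1 zk0 by (intro mult_right_mono) simp_all
    hence tpos: "\<tau> > 0" using zk1 by (simp add: \<tau>_def)
    have Wij: "\<And>i j. W$i$j = d$i * d$j * z$i$j" by (simp add: W_def)
    have qfW: "\<And>v. qf W v = qf z (\<chi> i. d$i * v$i)"
      unfolding qf_def by (intro sum.cong refl) (simp add: Wij ac_simps)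
    have dd: "(\<chi> i. d$i * ones$i) = d" by (simp add: vec_eq_iff ones_def)
    have qfWo: "qf W ones = \<sigma> + 2*e*r + e^2*zk"
    proof -
      have "qf W ones = qf z d" using qfW[of ones] dd by simp
      also have "\<dots> = qf z ones + 2 * e * bil z ones (ev k) + e^2 * qf z (ev k)"
        unfolding d_def by (rule qf_comb[OF s])
      also have "bil z ones (ev k) = r"
        using bil_sym[OF s, of ones "ev k"] bil_ev_ones[of z k] by (simp add: r_def)
      also have "qf z (ev k) = zk" by (simp add: qf_bil bil_ev zk_def)
      finally show ?thesis by (simp add: \<sigma>_def)
    qed
    have trW: "trace W = \<tau>"
    proof -
      have "\<And>i. W$i$i = z$i$i + (if i = k then (2*e + e^2) * zk else 0)"
      proof -
        fix i show "W$i$i = z$i$i + (if i = k then (2*e + e^2) * zk else 0)"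
          by (cases "i = k") (simp_all add: Wij di zk_def power2_eq_square algebra_simps)
      qed
      hence "trace W = (\<Sum>i\<in>UNIV. z$i$i) + (2*e + e^2) * zk"
        by (simp add: trace_def sum.distrib)
      thus ?thesis using tr by (simp add: trace_def \<tau>_def)
    qed
    define Ze where "Ze = (1/\<tau>) *\<^sub>R W"
    have Zeij: "\<And>i j. Ze$i$j = (1/\<tau>) * (d$i * d$j * z$i$j)" by (simp add: Ze_def Wij)
    have "Ze \<in> TT E"
    proof -
      have "\<forall>i j. Ze$i$j = Ze$j$i" using s by (simp add: Zeij mult.commute)
      moreover have "qf Ze v \<ge> 0" for v
      proof -
        have "qf z (\<chi> i. d$i * v$i) \<ge> 0" using p by (simp add: psd_iff)
        thus ?thesis using tpos by (simp add: Ze_def qf_scale qfW)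
      qed
      ultimately have "psd Ze" by (simp add: psd_iff)
      moreover have "nonneg_mat Ze"
        unfolding nonneg_mat_def Zeij
      proof (intro allI)
        fix i j
        have "z$i$j \<ge> 0" using n by (simp add: nonneg_mat_def)
        thus "0 \<le> 1 / \<tau> * (d$i * d$j * z$i$j)"
          using tpos dpos[of i] dpos[of j] by simp
      qed
      moreover have "trace Ze = 1" using tpos by (simp add: Ze_def trace_scale trW)
      moreover have "\<forall>i j. E i j \<longrightarrow> Ze$i$j = 0" using ed by (simp add: Zeij)
      ultimately show ?thesis by (simp add: TT_def)
    qed
    hence "qf Ze ones \<le> \<sigma>" using mx by (simp add: \<sigma>_def z_def)
    hence "(\<sigma> + 2*e*r + e^2*zk) / \<tau> \<le> \<sigma>" by (simp add: Ze_def qf_scale qfWo)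
    hence le: "\<sigma> + 2*e*r + e^2*zk \<le> \<sigma> * \<tau>" using tpos by (simp add: pos_divide_le_eq)
    have "2*e*(r - \<sigma>*zk) + e^2*(zk - \<sigma>*zk) = (\<sigma> + 2*e*r + e^2*zk) - \<sigma> * \<tau>"
      by (simp add: \<tau>_def algebra_simps)
    thus "2*e*(r - \<sigma>*zk) + e^2*(zk - \<sigma>*zk) \<le> 0" using le by linarith
  qed
  have "r - \<sigma>*zk = 0" by (rule quad_zero[of "1/2", OF _ key]) simp
  thus ?thesis by (simp add: r_def \<sigma>_def zk_def z_def)
qed



lemma sigma_ge1:
  assumes g: "simple_graph E" and mx: "\<forall>Z\<in>TT E. qf Z ones \<le> qf Zs ones"
  shows "qf Zs ones \<ge> 1"
  using mx outer_ev_TT[OF g, of undefined] by force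

lemma sigma_Q:
  assumes g: "simple_graph E" and zs: "Zs \<in> TT E" and mx: "\<forall>Z\<in>TT E. qf Z ones \<le> qf Zs ones"
  shows "Q_feasible (qf Zs ones) ((qf Zs ones) *\<^sub>R Zs)"
    and "\<forall>i j. E i j \<longrightarrow> ((qf Zs ones) *\<^sub>R Zs)$i$j = 0"
proof -
  define \<sigma> where "\<sigma> = qf Zs ones"
  have s1: "\<sigma> \<ge> 1" using sigma_ge1[OF g mx] by (simp add: \<sigma>_def)
  have p: "psd Zs" and n: "nonneg_mat Zs" and tr: "trace Zs = 1"
    and ed: "\<forall>i j. E i j \<longrightarrow> Zs$i$j = 0" using zs by (auto simp: TT_def)
  have s: "\<forall>i j. Zs$i$j = Zs$j$i" using p by (simp add: psd_iff)
  have "psd (\<sigma> *\<^sub>R Zs)"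
  proof -
    have "\<forall>i j. (\<sigma> *\<^sub>R Zs)$i$j = (\<sigma> *\<^sub>R Zs)$j$i" using s by simp
    moreover have "\<forall>v. qf (\<sigma> *\<^sub>R Zs) v \<ge> 0"
      using p s1 by (simp add: qf_scale psd_iff)
    ultimately show ?thesis by (simp add: psd_iff)
  qed
  moreover have "nonneg_mat (\<sigma> *\<^sub>R Zs)" using n s1 by (simp add: nonneg_mat_def)
  moreover have "trace (\<sigma> *\<^sub>R Zs) = \<sigma>" by (simp add: trace_scale tr)
  moreover have "\<forall>i. (\<Sum>j\<in>UNIV. (\<sigma> *\<^sub>R Zs)$i$j) = \<sigma> * (\<sigma> *\<^sub>R Zs)$i$i"
  proof
    fix i
    have "(\<Sum>j\<in>UNIV. (\<sigma> *\<^sub>R Zs)$i$j) = \<sigma> * (\<Sum>j\<in>UNIV. Zs$i$j)"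
      by (simp add: sum_distrib_left)
    also have "\<dots> = \<sigma> * (\<sigma> * Zs$i$i)" using perturb[OF zs mx, of i] by (simp add: \<sigma>_def)
    finally show "(\<Sum>j\<in>UNIV. (\<sigma> *\<^sub>R Zs)$i$j) = \<sigma> * (\<sigma> *\<^sub>R Zs)$i$i" by simp
  qed
  ultimately show "Q_feasible (qf Zs ones) ((qf Zs ones) *\<^sub>R Zs)"
    unfolding \<sigma>_def[symmetric] by (simp only: Q_feasible_iff) blast
  show "\<forall>i j. E i j \<longrightarrow> ((qf Zs ones) *\<^sub>R Zs)$i$j = 0" using ed by simp
qed

lemma theta_bound:
  assumes g: "simple_graph E" and zs: "Zs \<in> TT E" and mx: "\<forall>Z\<in>TT E. qf Z ones \<le> qf Zs ones"
    and ps: "psd (X - outer x)" and dg: "diag_vec X = x"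
    and ed: "\<forall>i j. E i j \<longrightarrow> X$i$j = 0" and n: "nonneg_mat X"
  shows "trace X \<le> qf Zs ones"
proof -
  have s1: "qf Zs ones \<ge> 1" by (rule sigma_ge1[OF g mx])
  have sx: "\<forall>i j. X$i$j = X$j$i"
  proof (intro allI)
    fix i j
    have "(X - outer x)$i$j = (X - outer x)$j$i" using ps by (simp add: psd_iff)
    thus "X$i$j = X$j$i" by (simp add: outer_def mult.commute)
  qed
  have qX: "qf X v = qf (X - outer x) v + (v \<bullet> x)^2" for v
    by (simp add: qf_diff qf_outer)
  have "psd X" using ps sx qX by (simp add: psd_iff add_nonneg_nonneg)
  have tx: "trace X = ones \<bullet> x"
    using dg by (auto simp: trace_def inner_vec_def ones_def diag_vec_def)
  have qo: "qf X ones \<ge> (trace X)^2"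
    using ps qX[of ones] tx by (simp add: psd_iff)
  have t0: "trace X \<ge> 0" using n unfolding trace_def nonneg_mat_def by (simp add: sum_nonneg)
  show ?thesis
  proof (cases "trace X = 0")
    case True thus ?thesis using s1 by simp
  next
    case False
    define s where "s = trace X"
    have sp: "s > 0" using t0 False by (simp add: s_def)
    define Z where "Z = (1/s) *\<^sub>R X"
    have "Z \<in> TT E"
    proof -
      have "psd Z"
      proof -
        have "\<forall>i j. Z$i$j = Z$j$i" using sx by (simp add: Z_def)
        moreover have "\<forall>v. qf Z v \<ge> 0" using \<open>psd X\<close> sp by (simp add: Z_def qf_scale psd_iff)
        ultimately show ?thesis by (simp add: psd_iff)
      qed
      moreover have "nonneg_mat Z" using n sp by (simp add: Z_def nonneg_mat_def)
      moreover have "trace Z = 1" using sp by (simp add: Z_def trace_scale s_def)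
      moreover have "\<forall>i j. E i j \<longrightarrow> Z$i$j = 0" using ed by (simp add: Z_def)
      ultimately show ?thesis by (simp add: TT_def)
    qed
    hence "qf Z ones \<le> qf Zs ones" using mx by blast
    moreover have "qf Z ones = qf X ones / s" by (simp add: Z_def qf_scale)
    moreover have "qf X ones / s \<ge> s"
      using qo sp by (simp add: s_def pos_le_divide_eq power2_eq_square)
    ultimately show ?thesis by (simp add: s_def)
  qed
qed



lemma theta_props:
  assumes g: "simple_graph E" and zs: "Zs \<in> TT E" and mx: "\<forall>Z\<in>TT E. qf Z ones \<le> qf Zs ones"
  shows "theta_plus E \<le> qf Zs ones"
    and "\<And>t X. Q_feasible t X \<Longrightarrow> t > 0 \<Longrightarrow> (\<forall>i j. E i j \<longrightarrow> X$i$j = 0) \<Longrightarrow> t \<le> theta_plus E"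
proof -
  let ?S = "{trace X | X :: real^'a^'a. \<exists>x. psd (X - outer x)
      \<and> diag_vec X = x \<and> (\<forall>i j. E i j \<longrightarrow> X $ i $ j = 0) \<and> nonneg_mat X}"
  have ub: "\<And>y. y \<in> ?S \<Longrightarrow> y \<le> qf Zs ones"
    using theta_bound[OF g zs mx] by blast
  have "outer (0::real^'a) = 0" by (simp add: outer_def vec_eq_iff)
  moreover have "diag_vec (0::real^'a^'a) = 0" by (simp add: diag_vec_def vec_eq_iff)
  moreover have "psd (0::real^'a^'a)" by (simp add: psd_iff qf_def)
  moreover have "nonneg_mat (0::real^'a^'a)" by (simp add: nonneg_mat_def)
  ultimately have "psd (0 - outer (0::real^'a)) \<and> diag_vec (0::real^'a^'a) = 0
     \<and> (\<forall>i j. E i j \<longrightarrow> (0::real^'a^'a)$i$j = 0) \<and> nonneg_mat (0::real^'a^'a)" by simp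
  hence "trace (0::real^'a^'a) \<in> ?S" by blast
  hence ne: "?S \<noteq> {}" by blast
  show "theta_plus E \<le> qf Zs ones"
    unfolding theta_plus_def by (rule cSup_least[OF ne ub])
  fix t X assume q: "Q_feasible t X" and t: "t > 0" and ed: "\<forall>i j. E i j \<longrightarrow> X$i$j = 0"
  have "nonneg_mat X" using q by (simp add: Q_feasible_def)
  hence "psd (X - outer (diag_vec X)) \<and> diag_vec X = diag_vec X \<and> (\<forall>i j. E i j \<longrightarrow> X$i$j = 0) \<and> nonneg_mat X"
    using Q_theta[OF q t] ed by blast
  hence mem: "trace X \<in> ?S" by blast
  have tX: "trace X = t" using q by (simp add: Q_feasible_def)
  have bd: "bdd_above ?S" unfolding bdd_above_def using ub by blast
  have "trace X \<le> Sup ?S" by (rule cSup_upper[OF mem bd])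
  thus "t \<le> theta_plus E" unfolding theta_plus_def tX .
qed

lemma closed_rs: "closed {X::real^'n::finite^'n. \<forall>i. (\<Sum>j\<in>UNIV. X$i$j) = t * X$i$i}"
  by (intro closed_Collect_all closed_Collect_eq continuous_intros)

theorem mainTheorem12:
  fixes E :: "'n::finite \<Rightarrow> 'n \<Rightarrow> bool" and t :: real
  assumes "simple_graph E"
    and "1 \<le> t" and "t \<le> real CARD('n)"
  shows "S_val E t > 0 \<longleftrightarrow> t > theta_plus E"
proof -
  note g = assms(1) and t1 = assms(2) and tn = assms(3)
  obtain Zs where zs: "Zs \<in> TT E" and mx: "\<forall>Z\<in>TT E. qf Z ones \<le> qf Zs ones"
    using TT_max[OF g] by blast
  define \<sigma> where "\<sigma> = qf Zs ones"
  have iff: "(\<exists>X. Q_feasible t X \<and> (\<forall>i j. E i j \<longrightarrow> X$i$j = 0)) \<longleftrightarrow> t \<le> theta_plus E"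
  proof
    assume "\<exists>X. Q_feasible t X \<and> (\<forall>i j. E i j \<longrightarrow> X$i$j = 0)"
    then obtain X where "Q_feasible t X" "\<forall>i j. E i j \<longrightarrow> X$i$j = 0" by blast
    thus "t \<le> theta_plus E" using theta_props(2)[OF g zs mx] t1 by simp
  next
    assume "t \<le> theta_plus E"
    hence ts: "t \<le> \<sigma>" using theta_props(1)[OF g zs mx] by (simp add: \<sigma>_def)
    obtain M where M: "Q_feasible t M" and z: "\<forall>i j. (\<sigma> *\<^sub>R Zs)$i$j = 0 \<longrightarrow> M$i$j = 0"
      using mono_Q[OF sigma_Q(1)[OF g zs mx] t1] ts by (auto simp: \<sigma>_def)
    have "\<forall>i j. E i j \<longrightarrow> M$i$j = 0"
    proof (intro allI impI)
      fix i j assume "E i j"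
      hence "(\<sigma> *\<^sub>R Zs)$i$j = 0" using sigma_Q(2)[OF g zs mx] unfolding \<sigma>_def by blast
      thus "M$i$j = 0" using z by blast
    qed
    thus "\<exists>X. Q_feasible t X \<and> (\<forall>i j. E i j \<longrightarrow> X$i$j = 0)" using M by blast
  qed
  define K where "K = {X::real^'n^'n. Q_feasible t X}"
  have K_eq: "K = {X. psd X \<and> nonneg_mat X \<and> trace X = t} \<inter> {X::real^'n^'n. \<forall>i. (\<Sum>j\<in>UNIV. X$i$j) = t * X$i$i}"
    by (auto simp: K_def Q_feasible_iff)
  have cK: "compact K" unfolding K_eq by (rule compact_PT[OF closed_rs])
  have "Q_feasible (real CARD('n)) (outer ones :: real^'n^'n)"
  proof -
    have "psd (outer ones :: real^'n^'n)" by (rule psd_outer)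
    moreover have "nonneg_mat (outer ones :: real^'n^'n)" by (simp add: nonneg_mat_def outer_def ones_def)
    moreover have "trace (outer ones :: real^'n^'n) = real CARD('n)" by (simp add: trace_def outer_def ones_def)
    moreover have "\<forall>i. (\<Sum>j\<in>UNIV. (outer ones :: real^'n^'n)$i$j) = real CARD('n) * (outer ones)$i$i"
      by (simp add: outer_def ones_def)
    ultimately show ?thesis by (simp add: Q_feasible_iff)
  qed
  then obtain X1 :: "real^'n^'n" where "Q_feasible t X1" using mono_Q[OF _ t1 tn] by blast
  hence neK: "K \<noteq> {}" by (auto simp: K_def)
  define f where "f = (\<lambda>X::real^'n^'n. frob (adj_matrix E) X / 2)"
  have cf: "continuous_on K f" unfolding f_def by (rule cont_frob)
  obtain X0 where x0: "X0 \<in> K" and mn: "\<forall>X\<in>K. f X0 \<le> f X"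
    using continuous_attains_inf[OF cK neK cf] by blast
  have fnn: "\<And>X. X \<in> K \<Longrightarrow> f X \<ge> 0"
    by (auto simp: K_def f_def Q_feasible_def intro: frob_nonneg)
  have Seq: "S_val E t = f X0"
  proof -
    have "{frob (adj_matrix E) X / 2 | X :: real^'n^'n. Q_feasible t X} = f ` K"
      by (auto simp: K_def f_def)
    hence "S_val E t = Inf (f ` K)" by (simp add: S_val_def)
    also have "\<dots> = f X0" using x0 mn by (intro cInf_eq_minimum) auto
    finally show ?thesis .
  qed
  have "f X0 = 0 \<longleftrightarrow> t \<le> theta_plus E"
  proof
    assume "f X0 = 0"
    hence "frob (adj_matrix E) X0 = 0" by (simp add: f_def)
    moreover have "nonneg_mat X0" using x0 by (simp add: K_def Q_feasible_def)
    ultimately have "\<forall>i j. E i j \<longrightarrow> X0$i$j = 0" using frob_zero by blast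
    thus "t \<le> theta_plus E" using iff x0 by (auto simp: K_def)
  next
    assume "t \<le> theta_plus E"
    then obtain X where X: "Q_feasible t X" "\<forall>i j. E i j \<longrightarrow> X$i$j = 0" using iff by blast
    have "nonneg_mat X" using X by (simp add: Q_feasible_def)
    hence "frob (adj_matrix E) X = 0" using X(2) frob_zero by blast
    hence "f X = 0" by (simp add: f_def)
    moreover have "X \<in> K" using X by (simp add: K_def)
    ultimately have "f X0 \<le> 0" using mn by metis
    thus "f X0 = 0" using fnn[OF x0] by linarith
  qed
  moreover have "f X0 > 0 \<longleftrightarrow> f X0 \<noteq> 0" using fnn[OF x0] by auto
  ultimately show ?thesis using Seq by (simp add: not_le)
qed

end
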